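(* Let $G$ be a layered group acting on the binary tree. Then $G$ is saturated.
   Context: The binary tree is $\mathcal T=X^*$ with $X=\{0,1\}$; $W$ is its isometry group. For $v\in X^*$ and $g\in W$, $v*g$ is the isometry acting as $g$ on the subtree $v\mathcal T$ (i.e. $(vw)^{v*g}=vw^g$) and fixing other vertices, and $g@v$ is the state of $g$ at $v$, i.e. $(vw)^g=v^g w^{g@v}$. $G\le W$ is level-transitive if it is transitive on $X^n$ for all $n$, and layered if it is level-transitive and $x*G\le G$ for all $x\in X$. $G$ is saturated if for every $n\in\mathbb N$ it contains a characteristic subgroup $H_n$ fixing every vertex of $X^n$ and such that $\{h@v:h\in H_n\}$ is level-transitive for every $v\in X^n$. *)

theory Defs
  imports "HOL-Algebra.Group" "HOL-Library.Sublist"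
begin

text \<open>Vertices of the binary tree X^* with X = {0,1} are boolean lists (False = 0, True = 1).
  The root is the empty list; level n is the set of lists of length n.\<close>

type_synonym vertex = "bool list"
type_synonym tree_iso = "vertex \<Rightarrow> vertex"

definition W :: "tree_iso set" where
  "W = {f. bij f \<and> (\<forall>v. length (f v) = length v) \<and> (\<forall>v n. f (take n v) = take n (f v))}"

text \<open>Right action: v^(g h) = (v^g)^h, hence the product g h is the function h o g.\<close>
definition W_grp :: "tree_iso monoid" where
  "W_grp = \<lparr>carrier = W, mult = (\<lambda>g h. h \<circ> g), one = id\<rparr>"

definition grp_of :: "tree_iso set \<Rightarrow> tree_iso monoid" where
  "grp_of G = W_grp\<lparr>carrier := G\<rparr>"

definition at_vertex :: "vertex \<Rightarrow> tree_iso \<Rightarrow> tree_iso" where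
  "at_vertex v g = (\<lambda>u. if prefix v u then v @ g (drop (length v) u) else u)"

text \<open>g @ v : the state (section) of g at v, i.e. (v w)^g = v^g w^(g@v).\<close>
definition state :: "tree_iso \<Rightarrow> vertex \<Rightarrow> tree_iso" where
  "state g v = (\<lambda>w. drop (length v) (g (v @ w)))"

definition level_transitive :: "tree_iso set \<Rightarrow> bool" where
  "level_transitive G \<longleftrightarrow>
     (\<forall>n. \<forall>u w. length u = n \<and> length w = n \<longrightarrow> (\<exists>g\<in>G. g u = w))"

definition layered :: "tree_iso set \<Rightarrow> bool" where
  "layered G \<longleftrightarrow> level_transitive G \<and> (\<forall>x::bool. \<forall>g\<in>G. at_vertex [x] g \<in> G)"

definition characteristic :: "'a set \<Rightarrow> ('a, 'b) monoid_scheme \<Rightarrow> bool" where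
  "characteristic H K \<longleftrightarrow> subgroup H K \<and> (\<forall>\<phi>. \<phi> \<in> iso K K \<longrightarrow> \<phi> ` H = H)"

definition saturated :: "tree_iso set \<Rightarrow> bool" where
  "saturated G \<longleftrightarrow>
     (\<forall>n::nat. \<exists>H. characteristic H (grp_of G)
        \<and> (\<forall>h\<in>H. \<forall>v. length v = n \<longrightarrow> h v = v)
        \<and> (\<forall>v. length v = n \<longrightarrow> level_transitive {state h v | h. h \<in> H}))"

end

theory Submission
  imports Defs "HOL-Algebra.Solvable_Groups"
begin

abbreviation finv :: "('a \<Rightarrow> 'b) \<Rightarrow> 'b \<Rightarrow> 'a" where "finv f \<equiv> inv_into UNIV f"

lemma W_comp: "f \<in> W \<Longrightarrow> g \<in> W \<Longrightarrow> g \<circ> f \<in> W"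
  unfolding W_def by (auto intro: bij_comp)

lemma W_inv: assumes "f \<in> W" shows "finv f \<in> W"
proof -
  have b: "bij f" and l: "\<And>v. length (f v) = length v" and t: "\<And>v n. f (take n v) = take n (f v)"
    using assms unfolding W_def by auto
  have "length (finv f v) = length v" for v
    using l[of "finv f v"] b by (simp add: bij_is_surj surj_f_inv_f)
  moreover have "finv f (take n v) = take n (finv f v)" for v n
  proof -
    have "f (take n (finv f v)) = take n v" using t[of n "finv f v"] b by (simp add: bij_is_surj surj_f_inv_f)
    then show ?thesis using b by (metis bij_is_inj inv_f_f)
  qed
  ultimately show ?thesis using b unfolding W_def by (auto intro: bij_imp_bij_inv)
qed

lemma id_W: "id \<in> W" unfolding W_def by auto

lemma W_group: "group W_grp"
proof (rule groupI)
  show "\<And>x y. x \<in> carrier W_grp \<Longrightarrow> y \<in> carrier W_grp \<Longrightarrow> x \<otimes>\<^bsub>W_grp\<^esub> y \<in> carrier W_grp"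
    by (simp add: W_grp_def W_comp)
  show "\<one>\<^bsub>W_grp\<^esub> \<in> carrier W_grp" by (simp add: W_grp_def id_W)
  show "\<And>x y z. x \<in> carrier W_grp \<Longrightarrow> y \<in> carrier W_grp \<Longrightarrow> z \<in> carrier W_grp \<Longrightarrow>
           x \<otimes>\<^bsub>W_grp\<^esub> y \<otimes>\<^bsub>W_grp\<^esub> z = x \<otimes>\<^bsub>W_grp\<^esub> (y \<otimes>\<^bsub>W_grp\<^esub> z)"
    by (simp add: W_grp_def comp_assoc)
  show "\<And>x. x \<in> carrier W_grp \<Longrightarrow> \<one>\<^bsub>W_grp\<^esub> \<otimes>\<^bsub>W_grp\<^esub> x = x" by (simp add: W_grp_def)
  show "\<And>x. x \<in> carrier W_grp \<Longrightarrow> \<exists>y\<in>carrier W_grp. y \<otimes>\<^bsub>W_grp\<^esub> x = \<one>\<^bsub>W_grp\<^esub>"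
  proof -
    fix x assume "x \<in> carrier W_grp"
    then have "x \<in> W" by (simp add: W_grp_def)
    then have "finv x \<in> W" "x \<circ> finv x = id" using W_inv unfolding W_def
      by (auto simp: bij_is_surj surj_iff[symmetric])
    then show "\<exists>y\<in>carrier W_grp. y \<otimes>\<^bsub>W_grp\<^esub> x = \<one>\<^bsub>W_grp\<^esub>"
      by (auto simp: W_grp_def)
  qed
qed

lemma W_inv_eq: assumes "x \<in> W" shows "inv\<^bsub>W_grp\<^esub> x = finv x"
proof -
  interpret group W_grp by (rule W_group)
  have "finv x \<in> W" "x \<circ> finv x = id" using W_inv assms unfolding W_def
      by (auto simp: bij_is_surj surj_iff[symmetric])
  then show ?thesis using assms by (intro inv_equality) (auto simp: W_grp_def)
qed

lemma K_facts:
  assumes "subgroup G W_grp"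
  shows "group (grp_of G)" "carrier (grp_of G) = G" "G \<subseteq> W"
    "\<And>a b. a \<otimes>\<^bsub>grp_of G\<^esub> b = b \<circ> a"
    "\<And>a. a \<in> G \<Longrightarrow> inv\<^bsub>grp_of G\<^esub> a = finv a"
    "\<And>a. a \<in> G \<Longrightarrow> finv a \<in> G"
proof -
  interpret group W_grp by (rule W_group)
  show "group (grp_of G)" unfolding grp_of_def using assms by (rule subgroup_imp_group)
  show "carrier (grp_of G) = G" by (simp add: grp_of_def)
  show GW: "G \<subseteq> W" using assms subgroup.subset by (force simp: W_grp_def)
  show "\<And>a b. a \<otimes>\<^bsub>grp_of G\<^esub> b = b \<circ> a" by (simp add: grp_of_def W_grp_def)
  show "\<And>a. a \<in> G \<Longrightarrow> inv\<^bsub>grp_of G\<^esub> a = finv a"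
    using assms GW W_inv_eq unfolding grp_of_def by auto
  show "\<And>a. a \<in> G \<Longrightarrow> finv a \<in> G"
    using assms GW W_inv_eq subgroup.m_inv_closed by fastforce
qed


lemma W_len: "f \<in> W \<Longrightarrow> length (f v) = length v" unfolding W_def by auto
lemma W_take: "f \<in> W \<Longrightarrow> f (take n v) = take n (f v)" unfolding W_def by auto
lemma W_bij: "f \<in> W \<Longrightarrow> bij f" unfolding W_def by auto

lemma fix_state: assumes "f \<in> W" "f u = u" shows "f (u @ y) = u @ state f u y"
proof -
  have "take (length u) (f (u @ y)) = u"
    using W_take[OF assms(1), of "length u" "u @ y"] assms(2) by simp
  then show ?thesis unfolding state_def by (metis append_take_drop_id)
qed

lemma finv_fix: assumes "bij f" "bij s" "\<And>y. f (u @ y) = u @ s y"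
  shows "finv f (u @ z) = u @ finv s z"
proof -
  have "f (u @ finv s z) = u @ z" using assms by (simp add: bij_is_surj surj_f_inv_f)
  then show ?thesis using assms(1) by (metis bij_is_inj inv_f_f)
qed

lemma W_root: "f \<in> W \<Longrightarrow> f [] = []"
  using W_take[of f 0 "[]"] by simp

lemma xor_form:
  assumes "a \<in> W" "\<forall>v. length v = n \<longrightarrow> a v = v" "length u = n"
  shows "\<exists>p. \<forall>x. a (u @ [x]) = u @ [x \<noteq> p]"
proof -
  have au: "a u = u" using assms by simp
  define \<tau> where "\<tau> x = hd (state a u [x])" for x
  have L: "length (state a u [x]) = 1" for x
    unfolding state_def using W_len[OF assms(1), of "u @ [x]"] by simp
  have E: "a (u @ [x]) = u @ [\<tau> x]" for x
  proof -
    from L[of x] obtain c where "state a u [x] = [c]" by (cases "state a u [x]") auto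
    then show ?thesis using fix_state[OF assms(1) au, of "[x]"] unfolding \<tau>_def by simp
  qed
  have "\<tau> True \<noteq> \<tau> False"
  proof
    assume "\<tau> True = \<tau> False"
    then have "a (u @ [True]) = a (u @ [False])" using E by simp
    then show False using W_bij[OF assms(1)] by (metis bij_is_inj inj_eq list.inject append1_eq_conv)
  qed
  then have "\<forall>x. \<tau> x = (x \<noteq> \<tau> False)" by (metis (full_types))
  then show ?thesis using E by metis
qed

lemma xor_form_inv:
  assumes "a \<in> W" "\<forall>x. a (u @ [x]) = u @ [x \<noteq> p]"
  shows "\<forall>x. finv a (u @ [x]) = u @ [x \<noteq> p]"
proof
  fix x
  have "a (u @ [x \<noteq> p]) = u @ [x]" using assms by auto
  then show "finv a (u @ [x]) = u @ [x \<noteq> p]" using W_bij[OF assms(1)] by (metis bij_is_inj inv_f_f)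
qed

definition St :: "tree_iso set \<Rightarrow> nat \<Rightarrow> tree_iso set" where
  "St G n = {g \<in> G. \<forall>v. length v = n \<longrightarrow> g v = v}"

lemma St_subgroup:
  assumes "subgroup G W_grp" shows "subgroup (St G n) (grp_of G)"
proof -
  note K = K_facts[OF assms]
  show ?thesis
  proof (rule group.subgroupI[OF K(1)])
    show "St G n \<subseteq> carrier (grp_of G)" using K by (auto simp: St_def)
    show "St G n \<noteq> {}"
    proof -
      have "\<one>\<^bsub>grp_of G\<^esub> \<in> G" using K(1,2) group.is_monoid monoid.one_closed by fastforce
      moreover have "\<one>\<^bsub>grp_of G\<^esub> = id" by (simp add: grp_of_def W_grp_def)
      ultimately show ?thesis by (auto simp: St_def)
    qed
    show "\<And>a. a \<in> St G n \<Longrightarrow> inv\<^bsub>grp_of G\<^esub> a \<in> St G n"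
    proof -
      fix a assume a: "a \<in> St G n"
      then have aG: "a \<in> G" and aW: "a \<in> W" using K by (auto simp: St_def)
      have "finv a v = v" if "length v = n" for v
        using a that W_bij[OF aW] unfolding St_def by (metis (mono_tags, lifting) bij_is_inj inv_f_f mem_Collect_eq)
      then show "inv\<^bsub>grp_of G\<^esub> a \<in> St G n" using K aG by (auto simp: St_def)
    qed
    show "\<And>a b. a \<in> St G n \<Longrightarrow> b \<in> St G n \<Longrightarrow> a \<otimes>\<^bsub>grp_of G\<^esub> b \<in> St G n"
    proof -
      fix a b assume ab: "a \<in> St G n" "b \<in> St G n"
      then have "a \<in> carrier (grp_of G)" "b \<in> carrier (grp_of G)" using K(2) by (auto simp: St_def)
      then have "a \<otimes>\<^bsub>grp_of G\<^esub> b \<in> carrier (grp_of G)"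
        by (rule monoid.m_closed[OF group.is_monoid[OF K(1)]])
      then have "b \<circ> a \<in> G" using K(2,4) by simp
      then show "a \<otimes>\<^bsub>grp_of G\<^esub> b \<in> St G n" using ab unfolding K(4) by (simp add: St_def)
    qed
  qed
qed


lemma comm_St:
  assumes G: "subgroup G W_grp" and a: "a \<in> St G n" and b: "b \<in> St G n"
  shows "a \<otimes>\<^bsub>grp_of G\<^esub> b \<otimes>\<^bsub>grp_of G\<^esub> inv\<^bsub>grp_of G\<^esub> a \<otimes>\<^bsub>grp_of G\<^esub> inv\<^bsub>grp_of G\<^esub> b \<in> St G (Suc n)"
proof -
  note K = K_facts[OF G]
  interpret Kg: group "grp_of G" by (rule K(1))
  have aG: "a \<in> G" and bG: "b \<in> G" using a b by (auto simp: St_def)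
  have aW: "a \<in> W" and bW: "b \<in> W" using aG bG K(3) by auto
  have inG: "a \<otimes>\<^bsub>grp_of G\<^esub> b \<otimes>\<^bsub>grp_of G\<^esub> inv\<^bsub>grp_of G\<^esub> a \<otimes>\<^bsub>grp_of G\<^esub> inv\<^bsub>grp_of G\<^esub> b \<in> G"
  proof -
    have "a \<in> carrier (grp_of G)" "b \<in> carrier (grp_of G)" using aG bG K(2) by auto
    then show ?thesis using K(2) by (metis Kg.m_closed Kg.inv_closed)
  qed
  have eq: "a \<otimes>\<^bsub>grp_of G\<^esub> b \<otimes>\<^bsub>grp_of G\<^esub> inv\<^bsub>grp_of G\<^esub> a \<otimes>\<^bsub>grp_of G\<^esub> inv\<^bsub>grp_of G\<^esub> b
     = finv b \<circ> (finv a \<circ> (b \<circ> a))" using K(4,5) aG bG by simp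
  have "(finv b \<circ> (finv a \<circ> (b \<circ> a))) v = v" if "length v = Suc n" for v
  proof -
    obtain u x where v: "v = u @ [x]" using \<open>length v = Suc n\<close>
      by (metis append_butlast_last_id length_0_conv nat.simps(3))
    have u: "length u = n" using that v by simp
    obtain p where p: "\<forall>x. a (u @ [x]) = u @ [x \<noteq> p]"
      using xor_form[OF aW _ u] a by (auto simp: St_def)
    obtain q where q: "\<forall>x. b (u @ [x]) = u @ [x \<noteq> q]"
      using xor_form[OF bW _ u] b by (auto simp: St_def)
    note pi = xor_form_inv[OF aW p] and qi = xor_form_inv[OF bW q]
    show ?thesis using p q pi qi v by (cases x; cases p; cases q) simp_all
  qed
  then show ?thesis using inG eq by (simp add: St_def)
qed

lemma D_St:
  assumes G: "subgroup G W_grp"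
  shows "(derived (grp_of G) ^^ n) G \<subseteq> St G n"
proof (induction n)
  case 0
  have "g [] = []" if "g \<in> G" for g using that K_facts(3)[OF G] W_root by auto
  then show ?case by (auto simp: St_def)
next
  case (Suc n)
  note K = K_facts[OF G]
  interpret Kg: group "grp_of G" by (rule K(1))
  have "derived_set (grp_of G) ((derived (grp_of G) ^^ n) G) \<subseteq> St G (Suc n)"
    using comm_St[OF G] Suc.IH by blast
  then have "derived (grp_of G) ((derived (grp_of G) ^^ n) G) \<subseteq> St G (Suc n)"
    unfolding derived_def by (rule Kg.generate_subgroup_incl[OF _ St_subgroup[OF G]])
  then show ?case by simp
qed


lemma D_sub_G: assumes G: "subgroup G W_grp" shows "(derived (grp_of G) ^^ n) G \<subseteq> G"
  using D_St[OF G, of n] by (auto simp: St_def)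

lemma states_cover:
  assumes G: "subgroup G W_grp" and L: "layered G"
  shows "\<forall>v g. length v = n \<longrightarrow> g \<in> G \<longrightarrow> (\<exists>h\<in>(derived (grp_of G) ^^ n) G. state h v = g)"
proof (induction n)
  case 0
  have "state h ([]::vertex) = h" for h by (simp add: state_def)
  then show ?case by auto
next
  case (Suc n)
  note K = K_facts[OF G]
  interpret Kg: group "grp_of G" by (rule K(1))
  let ?D = "(derived (grp_of G) ^^ n) G"
  show ?case
  proof (intro allI impI)
    fix v :: vertex and g assume v: "length v = Suc n" and gG: "g \<in> G"
    obtain u x where vu: "v = u @ [x]"
      by (metis v append_butlast_last_id length_0_conv nat.simps(3))
    have u: "length u = n" using v vu by simp
    have gW: "g \<in> W" using gG K(3) by auto
    obtain t where tG: "t \<in> G" and tx: "t [x] = [\<not> x]"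
      using L unfolding layered_def level_transitive_def by (metis length_Cons list.size(3))
    define r where "r = at_vertex [x] (finv g)"
    have rG: "r \<in> G" using L K(6)[OF gG] unfolding layered_def r_def by blast
    obtain a where aD: "a \<in> ?D" and sa: "state a u = t" using Suc.IH u tG by blast
    obtain b where bD: "b \<in> ?D" and sb: "state b u = r" using Suc.IH u rG by blast
    have aG: "a \<in> G" and bG: "b \<in> G" using aD bD D_sub_G[OF G] by auto
    have aW: "a \<in> W" and bW: "b \<in> W" and tW: "t \<in> W" and rW: "r \<in> W"
      using aG bG tG rG K(3) by auto
    have au: "a u = u" and bu: "b u = u" using aD bD D_St[OF G, of n] u by (auto simp: St_def)
    have A: "a (u @ y) = u @ t y" for y using fix_state[OF aW au] sa by simp
    have B: "b (u @ y) = u @ r y" for y using fix_state[OF bW bu] sb by simp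
    have Ai: "finv a (u @ y) = u @ finv t y" for y
      by (rule finv_fix[OF W_bij[OF aW] W_bij[OF tW] A])
    have Bi: "finv b (u @ y) = u @ finv r y" for y
      by (rule finv_fix[OF W_bij[OF bW] W_bij[OF rW] B])
    define h where "h = a \<otimes>\<^bsub>grp_of G\<^esub> b \<otimes>\<^bsub>grp_of G\<^esub> inv\<^bsub>grp_of G\<^esub> a \<otimes>\<^bsub>grp_of G\<^esub> inv\<^bsub>grp_of G\<^esub> b"
    have hD: "h \<in> (derived (grp_of G) ^^ Suc n) G"
      unfolding h_def using aD bD by (auto simp: derived_def intro: generate.incl)
    have heq: "h = finv b \<circ> (finv a \<circ> (b \<circ> a))" unfolding h_def using K(4,5) aG bG by simp
    have "state h v w = g w" for w
    proof -
      obtain y where ty: "t (x # w) = (\<not> x) # y"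
      proof -
        have "take 1 (t (x # w)) = [\<not> x]" using W_take[OF tW, of 1 "x # w"] tx by simp
        then show ?thesis using that by (cases "t (x # w)") auto
      qed
      have ry: "r ((\<not> x) # y) = (\<not> x) # y" unfolding r_def at_vertex_def by simp
      have tinv: "finv t ((\<not> x) # y) = x # w" using ty W_bij[OF tW] by (metis bij_is_inj inv_f_f)
      have "r (x # g w) = x # w" unfolding r_def at_vertex_def using W_bij[OF gW]
        by (simp add: bij_is_inj)
      then have rinv: "finv r (x # w) = x # g w" using W_bij[OF rW] by (metis bij_is_inj inv_f_f)
      have "h (u @ x # w) = u @ x # g w" unfolding heq using A B Ai Bi ty ry tinv rinv by simp
      then show ?thesis unfolding state_def vu using u by simp
    qed
    then have "state h v = g" by auto
    then show "\<exists>h\<in>(derived (grp_of G) ^^ Suc n) G. state h v = g" using hD by blast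
  qed
qed

theorem lemma3p8:
  assumes "subgroup G W_grp"
    and "layered G"
  shows "saturated G"
  unfolding saturated_def
proof
  fix n
  note G = assms(1)
  note K = K_facts[OF G]
  interpret Kg: group "grp_of G" by (rule K(1))
  let ?H = "(derived (grp_of G) ^^ n) G"
  have "characteristic ?H (grp_of G)"
    unfolding characteristic_def
  proof (intro conjI allI impI)
    show "subgroup ?H (grp_of G)" using Kg.exp_of_derived_is_subgroup[OF Kg.subgroup_self] K(2) by simp
    fix \<phi> assume phi: "\<phi> \<in> iso (grp_of G) (grp_of G)"
    then interpret gh: group_hom "grp_of G" "grp_of G" \<phi>
      by (simp add: group_hom.intro group_hom_axioms.intro iso_iff K(1))
    have "\<phi> ` G = G" using phi K(2) by (simp add: iso_def bij_betw_def)
    then show "\<phi> ` ?H = ?H" using gh.exp_of_derived_img[of G n] K(2) by simp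
  qed
  moreover have "\<forall>h\<in>?H. \<forall>v. length v = n \<longrightarrow> h v = v" using D_St[OF G, of n] by (auto simp: St_def)
  moreover have "\<forall>v. length v = n \<longrightarrow> level_transitive {state h v | h. h \<in> ?H}"
  proof (intro allI impI)
    fix v :: vertex assume v: "length v = n"
    show "level_transitive {state h v | h. h \<in> ?H}"
      unfolding level_transitive_def
    proof (intro allI impI)
      fix m and u w :: vertex assume "length u = m \<and> length w = m"
      then obtain g where gG: "g \<in> G" and gu: "g u = w"
        using assms(2) unfolding layered_def level_transitive_def by blast
      obtain h where "h \<in> ?H" "state h v = g" using states_cover[OF G assms(2)] v gG by blast
      then show "\<exists>g\<in>{state h v | h. h \<in> ?H}. g u = w" using gu by blast
    qed
  qed
  ultimately show "\<exists>H. characteristic H (grp_of G) \<and> (\<forall>h\<in>H. \<forall>v. length v = n \<longrightarrow> h v = v) \<and>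
      (\<forall>v. length v = n \<longrightarrow> level_transitive {state h v |h. h \<in> H})" by blast
qed

end
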